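(* If $p$ is prime, then $\operatorname{sf}(p-1)\equiv (p-1)!! \pmod p$.
   Context: For a natural number $n$, the double factorial $n!!$ is the product of the natural numbers less than or equal to $n$ that have the same parity as $n$. The superfactorial is $\operatorname{sf}(n)=\prod_{k=1}^{n} k!$. *)

theory Defs
  imports "HOL-Number_Theory.Number_Theory"
begin

definition double_factorial :: "nat \<Rightarrow> nat" where
  "double_factorial n = (\<Prod>k \<in> {k. 1 \<le> k \<and> k \<le> n \<and> even k = even n}. k)"

definition superfactorial :: "nat \<Rightarrow> nat" where
  "superfactorial n = (\<Prod>k = 1..n. fact k)"

end

theory Submission
  imports Defs
begin

lemma fact_split: "n \<le> N \<Longrightarrow> (fact N :: int) = fact (N - n) * (\<Prod>i<n. of_nat (N - i))"
proof (induction n)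
  case 0 then show ?case by simp
next
  case (Suc n)
  have "N - n = Suc (N - Suc n)" using Suc.prems by simp
  then have fe: "(fact (N - n) :: int) = of_nat (N - n) * fact (N - Suc n)"
    by (metis fact_Suc)
  have "(fact N :: int) = fact (N-n) * (\<Prod>i<n. of_nat (N-i))" using Suc by simp
  also have "\<dots> = fact (N - Suc n) * (\<Prod>i<Suc n. of_nat (N-i))"
    unfolding fe prod.lessThan_Suc by (simp only: mult_ac)
  finally show ?case .
qed

lemma prod_neg: "(\<Prod>i<n. - (of_nat i + 1) :: int) = (-1)^n * fact n"
  by (induction n) (simp_all add: algebra_simps)

lemma prod_mod_neg:
  assumes "n \<le> p - 1" "p > 0"
  shows "[(\<Prod>i<n. int (p - 1 - i)) = (-1)^n * fact n] (mod int p)"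
proof -
  have "[(\<Prod>i<n. int (p - 1 - i)) = (\<Prod>i<n. - (of_nat i + 1) :: int)] (mod int p)"
  proof (rule cong_prod)
    fix i assume "i \<in> {..<n}"
    then have "int (p - 1 - i) = int p + (- (of_nat i + 1))" using assms by auto
    then show "[int (p - 1 - i) = - (of_nat i + 1)] (mod int p)"
      by (simp add: cong_def)
  qed
  then show ?thesis using prod_neg by simp
qed

lemma pair_cong:
  assumes "prime p" "k \<le> p - 1"
  shows "[fact k * fact (p - 1 - k) * (-1)^(p - 1 - k) = (-1::int)] (mod int p)"
proof -
  have p0: "p > 0" using assms prime_gt_0_nat by blast
  have "p-1-(p-1-k) = k" using assms by simp
  have "(fact (p-1) :: int) = fact k * (\<Prod>i<p-1-k. of_nat (p - 1 - i))"
    by (rule fact_split[of "p-1-k" "p-1", unfolded \<open>p-1-(p-1-k) = k\<close>]) simp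
  moreover have "[(\<Prod>i<p-1-k. int (p - 1 - i)) = (-1)^(p-1-k) * fact (p-1-k)] (mod int p)"
    using prod_mod_neg[of "p-1-k" p] p0 by simp
  ultimately have "[fact (p-1) = fact k * ((-1)^(p-1-k) * fact (p-1-k)) :: int] (mod int p)"
    by (simp add: cong_scalar_left)
  moreover have "[fact (p-1) = (-1::int)] (mod int p)" using wilson_theorem assms(1) by blast
  ultimately show ?thesis
    by (metis (no_types, lifting) cong_sym cong_trans mult.assoc mult.commute)
qed

lemma prod_fold: "(\<Prod>k<2*(m::nat)+1. f k :: int) = f m * (\<Prod>k<m. f k * f (2*m - k))"
proof (induction m arbitrary: f)
  case 0 then show ?case by simp
next
  case (Suc m)
  have "(\<Prod>k<2*Suc m+1. f k) = f 0 * (\<Prod>k<2*m+2. f (Suc k))"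
    by (simp add: prod.lessThan_Suc_shift del: prod.lessThan_Suc)
  also have "\<dots> = f 0 * (\<Prod>k<2*m+1. f (Suc k)) * f (2*m+2)"
    by (simp add: algebra_simps)
  also have "(\<Prod>k<2*m+1. f (Suc k)) = f (Suc m) * (\<Prod>k<m. f (Suc k) * f (Suc (2*m - k)))"
    using Suc.IH[of "\<lambda>k. f (Suc k)"] by simp
  also have "(\<Prod>k<Suc m. f k * f (2*Suc m - k)) = f 0 * f (2*m+2) * (\<Prod>k<m. f (Suc k) * f (2 * Suc m - Suc k))"
    by (simp add: prod.lessThan_Suc_shift del: prod.lessThan_Suc)
  moreover have "(\<Prod>k<m. f (Suc k) * f (2 * Suc m - Suc k)) = (\<Prod>k<m. f (Suc k) * f (Suc (2*m - k)))"
    by (rule prod.cong) (auto simp: Suc_diff_le)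
  ultimately show ?case by (simp add: algebra_simps)
qed

lemma par_step: "even (s + (m - m div 2)) \<Longrightarrow> even (s + (m+1) + (Suc m - Suc m div 2))" for s m :: nat
  by presburger
lemma parity_sum: "even ((\<Sum>k<(m::nat). k + 1) + (m - m div 2))"
proof (induction m)
  case 0 then show ?case by simp
next
  case (Suc m)
  have "(\<Sum>k<Suc m. k+1) = (\<Sum>k<m. k+1) + (m+1)" by simp
  then show ?case using par_step[OF Suc.IH] by simp
qed

lemma dfact_even: "double_factorial (2*m) = 2^m * fact m"
proof -
  have "{k. 1 \<le> k \<and> k \<le> 2*m \<and> even k = even (2*m)} = (\<lambda>j. 2*j) ` {1..m}"
    by (auto simp: image_iff elim!: evenE)
  then have "double_factorial (2*m) = (\<Prod>j\<in>{1..m}. 2*j)"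
    by (simp add: double_factorial_def prod.reindex inj_on_def)
  also have "\<dots> = 2^m * fact m"
    by (simp add: prod.distrib fact_prod)
  finally show ?thesis .
qed

lemma gauss2:
  assumes "prime p" "p = 2*m+1" "m > 0"
  shows "[2^m = (-1::int)^(m - m div 2)] (mod int p)"
proof -
  interpret GAUSS p 2
  proof
    show "prime p" by fact
    show "2 < p" using assms by simp
    show "[2 \<noteq> 0] (mod int p)" using assms by (simp add: cong_def)
    show "(0::int) < 2" by simp
  qed
  have h: "(int p - 1) div 2 = int m" using assms by simp
  have "E = (\<lambda>x. x * 2) ` {int (m div 2)<..int m}"
  proof -
    have "\<And>x. x \<in> {0<..int m} \<Longrightarrow> (x*2) mod int p = x*2"
      using assms by (auto intro!: mod_pos_pos_trivial)
    then have "C = (\<lambda>x. x * 2) ` {0<..int m}"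
      unfolding C_def B_def A_def h by (auto simp: image_iff)
    then show ?thesis unfolding E_def h by (auto simp: image_iff)
  qed
  then have "card E = card {int (m div 2)<..int m}"
    by (simp add: card_image inj_on_def)
  also have "\<dots> = m - m div 2" by simp
  finally show ?thesis using pre_gauss_lemma h by simp
qed

lemma set_one: "{k. 1 \<le> k \<and> k \<le> (1::nat) \<and> even k = even (1::nat)} = {1}" by auto

lemma case_two: "[superfactorial (2 - 1) = double_factorial (2 - 1)] (mod 2)"
  using set_one by (simp add: superfactorial_def double_factorial_def)

theorem theorem5:
  fixes p :: nat
  assumes "prime p"
  shows "[superfactorial (p - 1) = double_factorial (p - 1)] (mod p)"
proof (cases "p = 2")
  case True
  then show ?thesis using case_two by simp
next
  case False
  have "p > 2" using prime_ge_2_nat[OF assms] False by simp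
  then have "odd p" using prime_odd_nat[OF assms] by simp
  then obtain m where pm: "p = 2*m+1" by (metis oddE)
  have m0: "m > 0" using pm False assms prime_gt_1_nat by (cases m) auto
  have "int (superfactorial (p-1)) = (\<Prod>k=1..2*m. fact k :: int)"
    by (simp add: superfactorial_def pm of_nat_prod)
  also have "\<dots> = (\<Prod>k<2*m+1. fact k :: int)"
  proof -
    have "{..<2*m+1} = insert 0 {1..2*m}" by auto
    then show ?thesis by simp
  qed
  also have "\<dots> = fact m * (\<Prod>k<m. fact k * fact (2*m - k) :: int)"
    by (rule prod_fold)
  finally have sf: "int (superfactorial (p-1)) = fact m * (\<Prod>k<m. fact k * fact (2*m - k) :: int)" .
  have "[(\<Prod>k<m. fact k * fact (2*m - k) :: int) = (\<Prod>k<m. (-1)^(k+1))] (mod int p)"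
  proof (rule cong_prod)
    fix k assume k: "k \<in> {..<m}"
    have c: "[fact k * fact (2*m - k) * (-1)^(2*m - k) = (-1::int)] (mod int p)"
      using pair_cong[OF assms, of k] k pm by simp
    have e: "(-1::int)^(2*m-k) = (-1)^k"
    proof -
      have "k < m" using k by simp
      then have "even (2*m-k) = even k" by presburger
      then show ?thesis by (simp add: minus_one_power_iff)
    qed
    have c': "[fact k * fact (2*m - k) * (-1)^k = (-1::int)] (mod int p)"
      using c unfolding e .
    have c2: "[fact k * fact (2*m - k) * (-1)^k * (-1)^k = (-1::int) * (-1)^k] (mod int p)"
      by (rule cong_scalar_right[OF c'])
    have s1: "(-1::int)^k * (-1)^k = 1" by (simp flip: power_mult_distrib)
    have q1: "fact k * fact (2*m - k) * (-1)^k * (-1)^k = (fact k * fact (2*m - k) :: int)"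
      by (simp add: mult.assoc s1)
    have q2: "(-1::int) * (-1)^k = (-1)^(k+1)" by simp
    show "[fact k * fact (2*m - k) = (-1::int)^(k+1)] (mod int p)"
      using c2 unfolding q1 q2 .
  qed
  also have "(\<Prod>k<m. (-1::int)^(k+1)) = (-1)^(\<Sum>k<m. k+1)"
    by (simp add: power_sum)
  also have "\<dots> = (-1)^(m - m div 2)"
    using parity_sum[of m] by (auto simp: minus_one_power_iff)
  finally have c1: "[int (superfactorial (p-1)) = fact m * (-1)^(m - m div 2)] (mod int p)"
    unfolding sf by (rule cong_scalar_left)
  have "int (double_factorial (p-1)) = 2^m * fact m"
    using dfact_even[of m] pm by simp
  moreover have "[2^m * fact m = fact m * (-1::int)^(m - m div 2)] (mod int p)"
    using cong_scalar_right[OF gauss2[OF assms pm m0], of "fact m"] by (simp add: mult.commute)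
  ultimately have "[int (superfactorial (p-1)) = int (double_factorial (p-1))] (mod int p)"
    using cong_trans[OF c1 cong_sym] by simp
  then show ?thesis by (simp add: cong_int_iff)
qed

end
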